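(* Suppose A1–A4 hold and let $\{x_k\}$ be generated by Algorithm 1. Let $\epsilon>0$ and let $T_0(\epsilon)$ be a nonnegative integer such that $\frac{1}{T}\sum_{k=0}^{T-1}\nu_k\le \frac{\kappa_c\epsilon^2}{2}$ for every integer $T\ge T_0(\epsilon)$ (such an integer exists by A4). If $T$ is a positive integer with $$T\ge\max\left\{T_0(\epsilon),\ \frac{2(f(x_0)-f_{low})}{\kappa_c\epsilon^2}\right\},$$ then $\min_{k=0,\dots,T-1}\|\nabla f(x_k)\|\le\epsilon$.
   Context: Let $(X,\langle\cdot,\cdot\rangle)$ be a real Hilbert space with induced norm $\|\cdot\|$, and $f:X\to\mathbb{R}$ Fréchet differentiable with gradient $\nabla f$. Algorithm 1 (general non-monotone descent algorithm): parameters $x_0\in X$, $\alpha_0>0$, $\beta,\rho\in(0,1)$. For $k=0,1,2,\dots$: choose $d_k\in X$ with $\langle\nabla f(x_k),d_k\rangle<0$; then for $l=0,1,2,\dots$ choose a number $\nu_{k,l}\ge 0$ and test $$f(x_k+\alpha_k\beta^l d_k)\le f(x_k)+\rho\alpha_k\beta^l\langle\nabla f(x_k),d_k\rangle+\nu_{k,l};$$ let $l_k$ be the first $l$ for which this holds, set $\nu_k:=\nu_{k,l_k}$, $x_{k+1}=x_k+\alpha_k\beta^{l_k}d_k$ and $\alpha_{k+1}=\alpha_k\beta^{l_k-1}$. It is assumed the algorithm generates infinite sequences (all $l_k$ finite). Assumptions: A1: $\nabla f$ is Lipschitz continuous with constant $L>0$. A2: there is $f_{low}\in\mathbb{R}$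 with $f(x)\ge f_{low}$ for all $x\in X$. A3: there are constants $c_1,c_2>0$ with $\langle\nabla f(x_k),d_k\rangle\le -c_1\|\nabla f(x_k)\|^2$ and $\|d_k\|\le c_2\|\nabla f(x_k)\|$ for all $k$. A4: $\lim_{T\to\infty}\frac1T\sum_{k=0}^{T-1}\nu_k=0$. Constant: $\kappa_c=\min\left\{\rho\beta\alpha_0c_1,\ \frac{2\beta\rho(1-\rho)c_1^2}{Lc_2^2}\right\}$. *)

theory Defs
  imports "HOL-Analysis.Analysis"
begin

definition nm_test :: "('a::real_inner \<Rightarrow> real) \<Rightarrow> ('a \<Rightarrow> 'a) \<Rightarrow> 'a \<Rightarrow> real \<Rightarrow> 'a
    \<Rightarrow> real \<Rightarrow> real \<Rightarrow> nat \<Rightarrow> real \<Rightarrow> bool" where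
  "nm_test f grad xk ak dk \<beta> \<rho> j nu \<longleftrightarrow>
     f (xk + (ak * \<beta> ^ j) *\<^sub>R dk) \<le> f xk + \<rho> * ak * \<beta> ^ j * inner (grad xk) dk + nu"

text \<open>(x, alpha, d, nu, l) are infinite sequences generated by Algorithm 1:
  nu k j is the number chosen at trial j of iteration k, l k is the first accepted trial.\<close>
definition algorithm1 ::
  "('a::real_inner \<Rightarrow> real) \<Rightarrow> ('a \<Rightarrow> 'a) \<Rightarrow> 'a \<Rightarrow> real \<Rightarrow> real \<Rightarrow> real
   \<Rightarrow> (nat \<Rightarrow> 'a) \<Rightarrow> (nat \<Rightarrow> real) \<Rightarrow> (nat \<Rightarrow> 'a) \<Rightarrow> (nat \<Rightarrow> nat \<Rightarrow> real) \<Rightarrow> (nat \<Rightarrow> nat) \<Rightarrow> bool"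
where
  "algorithm1 f grad x0 \<alpha>0 \<beta> \<rho> x \<alpha> d \<nu> l \<longleftrightarrow>
     \<alpha>0 > 0 \<and> 0 < \<beta> \<and> \<beta> < 1 \<and> 0 < \<rho> \<and> \<rho> < 1 \<and>
     x 0 = x0 \<and> \<alpha> 0 = \<alpha>0 \<and>
     (\<forall>k. inner (grad (x k)) (d k) < 0) \<and>
     (\<forall>k j. \<nu> k j \<ge> 0) \<and>
     (\<forall>k. nm_test f grad (x k) (\<alpha> k) (d k) \<beta> \<rho> (l k) (\<nu> k (l k))) \<and>
     (\<forall>k j. j < l k \<longrightarrow> \<not> nm_test f grad (x k) (\<alpha> k) (d k) \<beta> \<rho> j (\<nu> k j)) \<and>
     (\<forall>k. x (Suc k) = x k + (\<alpha> k * \<beta> ^ l k) *\<^sub>R d k) \<and>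
     (\<forall>k. \<alpha> (Suc k) = \<alpha> k * \<beta> powi (int (l k) - 1))"

definition kappa_c :: "real \<Rightarrow> real \<Rightarrow> real \<Rightarrow> real \<Rightarrow> real \<Rightarrow> real \<Rightarrow> real" where
  "kappa_c \<rho> \<beta> \<alpha>0 c1 c2 L =
     min (\<rho> * \<beta> * \<alpha>0 * c1) (2 * \<beta> * \<rho> * (1 - \<rho>) * c1\<^sup>2 / (L * c2\<^sup>2))"

end

theory Submission imports Defs begin
lemma descent:
  fixes f :: "'a::real_inner \<Rightarrow> real"
  assumes deriv: "\<And>y. (f has_derivative (\<lambda>h. inner (grad y) h)) (at y)"
  and lip: "\<And>y z. norm (grad y - grad z) \<le> L * norm (y - z)" and s: "s \<ge> 0"
  shows "f (x + s *\<^sub>R d) \<le> f x + s * inner (grad x) d + L * s^2 * (norm d)^2 / 2"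
proof -
  define \<phi> where "\<phi> t = f (x + t *\<^sub>R d) - t * inner (grad x) d - L*t^2*(norm d)^2/2" for t
  have D: "(\<phi> has_real_derivative (inner (grad (x + t*\<^sub>R d)) d - inner (grad x) d - L*t*(norm d)^2)) (at t)" for t
  proof -
    have l: "((\<lambda>t. x + t *\<^sub>R d) has_derivative (\<lambda>h. h *\<^sub>R d)) (at t)"
      by (auto intro!: derivative_eq_intros)
    have c: "((\<lambda>t. f (x + t *\<^sub>R d)) has_derivative (\<lambda>h. inner (grad (x + t*\<^sub>R d)) (h *\<^sub>R d))) (at t)"
      using diff_chain_at[OF l deriv] by (simp add: o_def)
    have c2: "((\<lambda>t. f (x + t *\<^sub>R d)) has_real_derivative inner (grad (x + t*\<^sub>R d)) d) (at t)"
      proof -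
      have eq: "(\<lambda>h. inner (grad (x + t*\<^sub>R d)) (h *\<^sub>R d)) = (*) (inner (grad (x + t*\<^sub>R d)) d)"
        by (rule ext) simp
      show ?thesis unfolding has_field_derivative_def using c unfolding eq .
    qed
    show ?thesis unfolding \<phi>_def
      by (rule derivative_eq_intros c2 refl | simp)+
  qed
  have "\<phi> s \<le> \<phi> 0"
  proof (rule DERIV_nonpos_imp_nonincreasing[OF s])
    fix t assume t: "0 \<le> t" "t \<le> s"
    have "inner (grad (x + t*\<^sub>R d)) d - inner (grad x) d = inner (grad (x + t*\<^sub>R d) - grad x) d"
      by (simp add: inner_diff_left)
    also have "\<dots> \<le> norm (grad (x + t*\<^sub>R d) - grad x) * norm d" by (rule norm_cauchy_schwarz)
    also have "\<dots> \<le> L * norm (t *\<^sub>R d) * norm d"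
      using lip[of "x + t*\<^sub>R d" x] by (intro mult_right_mono) auto
    also have "\<dots> = L*t*(norm d)^2" using t by (simp add: power2_eq_square)
    finally show "\<exists>y. (\<phi> has_real_derivative y) (at t) \<and> y \<le> 0"
      using D by (intro exI[of _ "inner (grad (x + t*\<^sub>R d)) d - inner (grad x) d - L*t*(norm d)^2"]) auto
  qed
  then show ?thesis unfolding \<phi>_def by simp
qed

theorem theorem2:
  fixes f :: "'a::{real_inner, complete_space} \<Rightarrow> real"
    and grad :: "'a \<Rightarrow> 'a"
    and x0 :: 'a and \<alpha>0 \<beta> \<rho> L f_low c1 c2 \<epsilon> :: real
    and x :: "nat \<Rightarrow> 'a" and \<alpha> :: "nat \<Rightarrow> real" and d :: "nat \<Rightarrow> 'a"
    and \<nu> :: "nat \<Rightarrow> nat \<Rightarrow> real" and l :: "nat \<Rightarrow> nat"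
    and T0 T :: nat
  assumes deriv: "\<And>y. (f has_derivative (\<lambda>h. inner (grad y) h)) (at y)"
    and alg: "algorithm1 f grad x0 \<alpha>0 \<beta> \<rho> x \<alpha> d \<nu> l"
    and A1: "L > 0" "\<And>y z. norm (grad y - grad z) \<le> L * norm (y - z)"
    and A2: "\<And>y. f y \<ge> f_low"
    and A3: "c1 > 0" "c2 > 0"
      "\<And>k. inner (grad (x k)) (d k) \<le> - c1 * (norm (grad (x k)))\<^sup>2"
      "\<And>k. norm (d k) \<le> c2 * norm (grad (x k))"
    and A4: "(\<lambda>T. (\<Sum>k<T. \<nu> k (l k)) / real T) \<longlonglongrightarrow> 0"
    and eps: "\<epsilon> > 0"
    and T0: "\<And>T'. T' \<ge> T0 \<Longrightarrow> (\<Sum>k<T'. \<nu> k (l k)) / real T'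
                 \<le> kappa_c \<rho> \<beta> \<alpha>0 c1 c2 L * \<epsilon>\<^sup>2 / 2"
    and Tpos: "T > 0"
    and Tbig: "real T \<ge> max (real T0)
                 (2 * (f x0 - f_low) / (kappa_c \<rho> \<beta> \<alpha>0 c1 c2 L * \<epsilon>\<^sup>2))"
  shows "Min ((\<lambda>k. norm (grad (x k))) ` {..<T}) \<le> \<epsilon>"
proof -
  have a0: "\<alpha>0 > 0" and b0: "0 < \<beta>" and b1: "\<beta> < 1" and r0: "0 < \<rho>" and r1: "\<rho> < 1"
    and x0: "x 0 = x0" and al0: "\<alpha> 0 = \<alpha>0" and neg: "\<And>k. inner (grad (x k)) (d k) < 0"
    and nun: "\<And>k j. \<nu> k j \<ge> 0"
    and acc: "\<And>k. nm_test f grad (x k) (\<alpha> k) (d k) \<beta> \<rho> (l k) (\<nu> k (l k))"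
    and rej: "\<And>k j. j < l k \<Longrightarrow> \<not> nm_test f grad (x k) (\<alpha> k) (d k) \<beta> \<rho> j (\<nu> k j)"
    and xs: "\<And>k. x (Suc k) = x k + (\<alpha> k * \<beta> ^ l k) *\<^sub>R d k"
    and als: "\<And>k. \<alpha> (Suc k) = \<alpha> k * \<beta> powi (int (l k) - 1)"
    using alg unfolding algorithm1_def by blast+
  define m where "m = 2*(1-\<rho>)*c1/(L*c2^2)"
  define t where "t k = \<alpha> k * \<beta> ^ l k" for k
  define \<kappa> where "\<kappa> = kappa_c \<rho> \<beta> \<alpha>0 c1 c2 L"
  define g where "g k = norm (grad (x k))" for k
  have m0: "m > 0" unfolding m_def using r1 A3 A1 by simp
  have als': "\<alpha> (Suc k) = t k / \<beta>" for k
  proof -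
    have "\<beta> powi (int (l k) - 1) = \<beta> ^ l k / \<beta>"
      using b0 by (simp add: power_int_diff power_int_of_nat)
    then show ?thesis unfolding t_def als by simp
  qed
  have apos: "\<alpha> k > 0" for k
    by (induction k) (use a0 al0 b0 in \<open>auto simp: als' t_def\<close>)
  have tpos: "t k > 0" for k using apos b0 unfolding t_def by simp
  have gpos: "g k > 0" for k
  proof -
    have "grad (x k) \<noteq> 0" using neg[of k] by auto
    then show ?thesis unfolding g_def by simp
  qed
  have big: "t k > \<beta> * m" if lk: "l k > 0" for k
  proof -
    define s where "s = \<alpha> k * \<beta> ^ (l k - 1)"
    have ts: "t k = \<beta> * s" unfolding t_def s_def using lk
      by (metis Suc_diff_1 mult.left_commute power_Suc)
    have s0: "s > 0" unfolding s_def using apos b0 by simp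
    have "\<not> nm_test f grad (x k) (\<alpha> k) (d k) \<beta> \<rho> (l k - 1) (\<nu> k (l k - 1))"
      using rej lk by simp
    then have fail: "f (x k + s *\<^sub>R d k) > f (x k) + \<rho> * s * inner (grad (x k)) (d k)"
      unfolding nm_test_def s_def using nun[of k "l k - 1"] by (simp add: mult.assoc)
    have desc: "f (x k + s *\<^sub>R d k) \<le> f (x k) + s * inner (grad (x k)) (d k) + L * s^2 * (norm (d k))^2 / 2"
      by (rule descent[OF deriv A1(2)]) (use s0 in simp)
    define p where "p = - inner (grad (x k)) (d k)"
    have p1: "p \<ge> c1 * (g k)^2" unfolding p_def g_def using A3(3)[of k] by simp
    have dn: "(norm (d k))^2 \<le> c2^2 * (g k)^2"
      using A3(4)[of k] unfolding g_def by (metis norm_ge_zero power_mono power_mult_distrib)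
    have "(1-\<rho>) * s * p < L * s^2 * (norm (d k))^2 / 2"
      using fail desc unfolding p_def by (simp add: algebra_simps)
    also have "\<dots> \<le> L * s^2 * (c2^2 * (g k)^2) / 2"
      using dn A1(1) by (intro divide_right_mono mult_left_mono) auto
    finally have "(1-\<rho>) * s * (c1 * (g k)^2) < L * s^2 * (c2^2 * (g k)^2) / 2"
      using p1 r1 s0 by (smt (verit) mult_left_mono mult_pos_pos)
    then have "((1-\<rho>) * c1) * (s * (g k)^2) < (L * s * c2^2 / 2) * (s * (g k)^2)"
      by (simp add: power2_eq_square algebra_simps)
    moreover have "0 \<le> s * (g k)^2" using s0 by simp
    ultimately have "(1-\<rho>) * c1 < L * s * c2^2 / 2"
      by (rule mult_right_less_imp_less)
    then have "m < s" unfolding m_def using A1(1) A3(2) by (simp add: field_simps)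
    then show ?thesis using ts b0 by simp
  qed
  have alb: "\<alpha> k \<ge> min \<alpha>0 m" for k
  proof (induction k)
    case 0 then show ?case using al0 by simp
  next
    case (Suc k)
    show ?case
    proof (cases "l k = 0")
      case True
      then have "\<alpha> (Suc k) = \<alpha> k / \<beta>" using als' t_def by simp
      moreover have "\<alpha> k / \<beta> \<ge> \<alpha> k" using apos[of k] b0 b1 by (simp add: field_simps)
      ultimately show ?thesis using Suc by simp
    next
      case False
      then have "t k / \<beta> > m" using big[of k] b0 by (simp add: field_simps)
      then show ?thesis using als' by simp
    qed
  qed
  have tlb: "t k \<ge> \<beta> * min \<alpha>0 m" for k
  proof (cases "l k = 0")
    case True
    then have "t k = \<alpha> k" unfolding t_def by simp
    moreover have "\<beta> * min \<alpha>0 m \<le> min \<alpha>0 m" using b1 b0 a0 m0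
      by (intro mult_left_le_one_le) auto
    ultimately show ?thesis using alb[of k] by linarith
  next
    case False
    have "\<beta> * min \<alpha>0 m \<le> \<beta> * m" using b0 by (intro mult_left_mono) auto
    then show ?thesis using big[of k] False by linarith
  qed
  have kap: "\<kappa> = \<rho> * c1 * (\<beta> * min \<alpha>0 m)"
  proof -
    have "\<rho> * c1 * (\<beta> * min \<alpha>0 m) = min (\<rho> * c1 * \<beta> * \<alpha>0) (\<rho> * c1 * \<beta> * m)"
      using r0 A3(1) b0 by (simp add: min_mult_distrib_left mult.assoc)
    then show ?thesis unfolding \<kappa>_def kappa_c_def m_def using A1(1) A3(2)
      by (simp add: power2_eq_square algebra_simps)
  qed
  have kpos: "\<kappa> > 0" unfolding kap using r0 A3(1) b0 a0 m0 by simp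
  have step: "f (x (Suc k)) \<le> f (x k) - \<kappa> * (g k)^2 + \<nu> k (l k)" for k
  proof -
    have "f (x (Suc k)) \<le> f (x k) + \<rho> * t k * inner (grad (x k)) (d k) + \<nu> k (l k)"
      using acc[of k] unfolding nm_test_def xs t_def by (simp add: mult.assoc)
    also have "\<rho> * t k * inner (grad (x k)) (d k) \<le> \<rho> * t k * (- c1 * (g k)^2)"
      using A3(3)[of k] r0 tpos[of k] unfolding g_def by (intro mult_left_mono) auto
    also have "\<rho> * t k * (- c1 * (g k)^2) \<le> - \<kappa> * (g k)^2"
    proof -
      have "\<kappa> \<le> \<rho> * c1 * t k" unfolding kap using tlb[of k] r0 A3(1) by simp
      then have "\<kappa> * (g k)^2 \<le> \<rho> * c1 * t k * (g k)^2" by (intro mult_right_mono) auto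
      then show ?thesis by (simp add: algebra_simps)
    qed
    finally show ?thesis by simp
  qed
  have sum: "f (x n) \<le> f x0 - \<kappa> * (\<Sum>k<n. (g k)^2) + (\<Sum>k<n. \<nu> k (l k))" for n
  proof (induction n)
    case 0 then show ?case using x0 by simp
  next
    case (Suc n) then show ?case using step[of n] by (simp add: algebra_simps)
  qed
  show ?thesis
  proof (rule ccontr)
    assume "\<not> ?thesis"
    then have "\<epsilon> < Min ((\<lambda>k. norm (grad (x k))) ` {..<T})" by simp
    then have gt: "\<forall>k<T. \<epsilon> < g k" using Tpos unfolding g_def by (subst (asm) Min_gr_iff) auto
    have "\<epsilon>^2 < (g k)^2" if "k < T" for k using gt that eps by (intro power_strict_mono) auto
    then have "(\<Sum>k<T. \<epsilon>^2) < (\<Sum>k<T. (g k)^2)" using Tpos by (intro sum_strict_mono) auto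
    then have s1: "real T * \<epsilon>^2 < (\<Sum>k<T. (g k)^2)" by simp
    have nu: "(\<Sum>k<T. \<nu> k (l k)) \<le> real T * (\<kappa> * \<epsilon>^2 / 2)"
      using T0[of T] Tbig Tpos unfolding \<kappa>_def by (simp add: field_simps)
    have "2 * (f x0 - f_low) / (\<kappa> * \<epsilon>^2) \<le> real T" using Tbig unfolding \<kappa>_def by simp
    then have fl: "f x0 - f_low \<le> real T * (\<kappa> * \<epsilon>^2 / 2)"
      using kpos eps by (simp add: field_simps)
    have "f_low \<le> f (x T)" by (rule A2)
    also have "\<dots> \<le> f x0 - \<kappa> * (\<Sum>k<T. (g k)^2) + (\<Sum>k<T. \<nu> k (l k))" by (rule sum)
    finally have "\<kappa> * (\<Sum>k<T. (g k)^2) \<le> real T * (\<kappa> * \<epsilon>^2)" using nu fl by simp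
    moreover have "\<kappa> * (real T * \<epsilon>^2) < \<kappa> * (\<Sum>k<T. (g k)^2)" using s1 kpos by simp
    ultimately show False by (simp add: algebra_simps)
  qed
qed

end
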